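(* Let $\mathbb{G}$ be a linear array whose difference coarray is hole-free, and let $\mathbb{F}_r$ be the fractal array generated by $\mathbb{G}$. Denote by $F_{\mathbb{G}}$ and $F_r$ the fragilities of $\mathbb{G}$ and $\mathbb{F}_r$. Then $F_r\le F_{\mathbb{G}}$ for all $r\ge1$.
   Context: A linear array is a finite set $\mathbb{G}\subset\mathbb{Z}$ with $\min\mathbb{G}=0$; its difference coarray is $\mathbb{D}=\{n_1-n_2:n_1,n_2\in\mathbb{G}\}$; its central ULA $\mathbb{U}$ is the largest set $\{-m,\dots,m\}$ contained in $\mathbb{D}$; $\mathbb{D}$ is hole-free if $\mathbb{D}=\mathbb{U}$. The fractal array generated by $\mathbb{G}$ (with $M=|\mathbb{U}|$) is $\mathbb{F}_0=\{0\}$, $\mathbb{F}_{r+1}=\bigcup_{n\in\mathbb{G}}(\mathbb{F}_r+nM^r)$ where $A+t=\{a+t:a\in A\}$. For an array $\mathbb{A}$ with difference coarray $\mathbb{D}_{\mathbb{A}}$, a sensor $n\in\mathbb{A}$ is essential if the difference coarray of $\mathbb{A}\setminus\{n\}$ differs from $\mathbb{D}_{\mathbb{A}}$. The fragility of $\mathbb{A}$ is $F_{\mathbb{A}}=|\mathbb{E}|/|\mathbb{A}|$ where $\mathbb{E}$ is the set of essential sensors of $\mathbb{A}$. *)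

theory Defs
  imports Complex_Main
begin

definition linear_array :: "int set \<Rightarrow> bool" where
  "linear_array G \<longleftrightarrow> finite G \<and> G \<noteq> {} \<and> Min G = 0"

definition diff_coarray :: "int set \<Rightarrow> int set" where
  "diff_coarray A = {n1 - n2 | n1 n2. n1 \<in> A \<and> n2 \<in> A}"

definition central_ULA :: "int set \<Rightarrow> int set" where
  "central_ULA A = (let m = (GREATEST m::nat. {- int m..int m} \<subseteq> diff_coarray A)
                    in {- int m..int m})"

definition hole_free :: "int set \<Rightarrow> bool" where
  "hole_free A \<longleftrightarrow> diff_coarray A = central_ULA A"

definition translate :: "int set \<Rightarrow> int \<Rightarrow> int set" where
  "translate A t = (\<lambda>a. a + t) ` A"

fun fractal :: "int set \<Rightarrow> nat \<Rightarrow> int set" where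
  "fractal G 0 = {0}"
| "fractal G (Suc r) =
     (\<Union>n\<in>G. translate (fractal G r) (n * int (card (central_ULA G)) ^ r))"

definition essential :: "int set \<Rightarrow> int \<Rightarrow> bool" where
  "essential A n \<longleftrightarrow> n \<in> A \<and> diff_coarray (A - {n}) \<noteq> diff_coarray A"

definition essential_set :: "int set \<Rightarrow> int set" where
  "essential_set A = {n \<in> A. essential A n}"

definition fragility :: "int set \<Rightarrow> real" where
  "fragility A = real (card (essential_set A)) / real (card A)"

end

theory Submission
  imports Defs
begin

lemma divmod_aux:
  fixes a n T :: int
  assumes "0 \<le> a" "a < T"
  shows "(a + n*T) div T = n" "(a + n*T) mod T = a"
  using assms by simp_all

lemma inj_aux:
  fixes a a' n n' T :: int
  assumes "0 \<le> a" "a < T" "0 \<le> a'" "a' < T" "a + n*T = a' + n'*T"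
  shows "a = a' \<and> n = n'"
  using divmod_aux[OF assms(1,2), of n] divmod_aux[OF assms(3,4), of n'] assms(5) by metis

lemma G_bound:
  assumes "linear_array G" "hole_free G"
  shows "\<forall>n\<in>G. 0 \<le> n \<and> n \<le> int (card (central_ULA G)) - 1"
proof -
  obtain k :: nat where k: "central_ULA G = {- int k..int k}"
    unfolding central_ULA_def Let_def by blast
  have c: "int (card (central_ULA G)) = 2 * int k + 1" using k by simp
  have fin: "finite G" "G \<noteq> {}" "Min G = 0" using assms(1) unfolding linear_array_def by auto
  have z: "0 \<in> G" using fin Min_in by metis
  show ?thesis
  proof
    fix n assume n: "n \<in> G"
    have "0 \<le> n" using fin n Min_le by metis
    moreover have "n - 0 \<in> diff_coarray G" unfolding diff_coarray_def using n z by blast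
    hence "n \<le> int k" using assms(2) k unfolding hole_free_def by auto
    ultimately show "0 \<le> n \<and> n \<le> int (card (central_ULA G)) - 1" using c by simp
  qed
qed

lemma fractal_Suc_image:
  "fractal G (Suc s) = (\<lambda>(a,n). a + n * int (card (central_ULA G)) ^ s) ` (fractal G s \<times> G)"
  by (auto simp: translate_def)

lemma fractal_bound:
  assumes "linear_array G" "hole_free G"
  shows "fractal G r \<subseteq> {0..<int (card (central_ULA G)) ^ r} \<and> finite (fractal G r)"
proof (induction r)
  case 0
  then show ?case by simp
next
  case (Suc s)
  define c where "c = int (card (central_ULA G))"
  have gb: "\<forall>n\<in>G. 0 \<le> n \<and> n \<le> c - 1" using G_bound[OF assms] c_def by simp
  have finG: "finite G" using assms(1) unfolding linear_array_def by auto
  have "fractal G (Suc s) \<subseteq> {0..<c ^ Suc s}"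
  proof
    fix x assume "x \<in> fractal G (Suc s)"
    then obtain a n where x: "x = a + n * c^s" "a \<in> fractal G s" "n \<in> G"
      unfolding fractal_Suc_image c_def by auto
    have a: "0 \<le> a" "a < c^s" using x(2) Suc c_def by auto
    have n: "0 \<le> n" "n \<le> c - 1" using gb x(3) by auto
    have cp: "0 \<le> c^s" using a by simp
    have "n * c^s \<le> (c-1) * c^s" using mult_right_mono[OF n(2) cp] .
    moreover have "0 \<le> n * c^s" using n cp by simp
    ultimately show "x \<in> {0..<c ^ Suc s}" using a x(1) by (simp add: algebra_simps)
  qed
  moreover have "finite (fractal G (Suc s))" unfolding fractal_Suc_image using Suc finG by simp
  ultimately show ?case using c_def by simp
qed

lemma coarray_mono: "A \<subseteq> B \<Longrightarrow> diff_coarray A \<subseteq> diff_coarray B"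
  unfolding diff_coarray_def by blast

lemma ess_sub:
  fixes F G :: "int set" and T :: int
  assumes Fb: "F \<subseteq> {0..<T}"
  shows "essential_set ((\<lambda>(a,n). a + n * T) ` (F \<times> G))
         \<subseteq> (\<lambda>(a,n). a + n * T) ` (F \<times> essential_set G)"
proof
  let ?F' = "(\<lambda>(a,n). a + n * T) ` (F \<times> G)"
  fix x assume xe: "x \<in> essential_set ?F'"
  then obtain a n where x: "x = a + n*T" "a \<in> F" "n \<in> G"
    unfolding essential_set_def essential_def by auto
  have "n \<in> essential_set G"
  proof (rule ccontr)
    assume "n \<notin> essential_set G"
    hence eq: "diff_coarray (G - {n}) = diff_coarray G"
      using x(3) unfolding essential_set_def essential_def by auto
    have "diff_coarray ?F' \<subseteq> diff_coarray (?F' - {x})"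
    proof
      fix d assume "d \<in> diff_coarray ?F'"
      then obtain a1 n1 a2 n2 where d: "d = (a1 + n1*T) - (a2 + n2*T)"
        "a1 \<in> F" "n1 \<in> G" "a2 \<in> F" "n2 \<in> G"
        unfolding diff_coarray_def by auto
      have "n1 - n2 \<in> diff_coarray G" unfolding diff_coarray_def using d by blast
      hence "n1 - n2 \<in> diff_coarray (G - {n})" using eq by simp
      then obtain p q where pq: "n1 - n2 = p - q" "p \<in> G" "p \<noteq> n" "q \<in> G" "q \<noteq> n"
        unfolding diff_coarray_def by auto
      have y1: "a1 + p*T \<in> ?F'" using d(2) pq(2) by (intro image_eqI[where x="(a1,p)"]) auto
      have y2: "a2 + q*T \<in> ?F'" using d(4) pq(4) by (intro image_eqI[where x="(a2,q)"]) auto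
      have ab: "0 \<le> a1" "a1 < T" "0 \<le> a2" "a2 < T" "0 \<le> a" "a < T"
        using Fb d(2,4) x(2) by auto
      have "a1 + p*T \<noteq> x"
        using inj_aux[of a1 T a p n] ab x pq(3) by auto
      moreover have "a2 + q*T \<noteq> x"
        using inj_aux[of a2 T a q n] ab x pq(5) by auto
      moreover have "d = (a1 + p*T) - (a2 + q*T)"
      proof -
        have "n1*T - n2*T = p*T - q*T" by (metis pq(1) left_diff_distrib)
        then show ?thesis using d(1) by linarith
      qed
      ultimately show "d \<in> diff_coarray (?F' - {x})" unfolding diff_coarray_def
        using y1 y2 by blast
    qed
    moreover have "diff_coarray (?F' - {x}) \<subseteq> diff_coarray ?F'" by (rule coarray_mono) blast
    ultimately show False using xe unfolding essential_set_def essential_def by blast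
  qed
  then show "x \<in> (\<lambda>(a,n). a + n * T) ` (F \<times> essential_set G)" using x by force
qed

theorem theorem6:
  fixes G :: "int set" and r :: nat
  assumes "linear_array G" and "hole_free G" and "r \<ge> 1"
  shows "fragility (fractal G r) \<le> fragility G"
proof -
  obtain s where r: "r = Suc s" using assms(3) by (cases r) auto
  define T where "T = int (card (central_ULA G)) ^ s"
  define F where "F = fractal G s"
  have Fb: "F \<subseteq> {0..<T}" and finF: "finite F"
    using fractal_bound[OF assms(1,2), of s] F_def T_def by auto
  have finG: "finite G" "G \<noteq> {}" using assms(1) unfolding linear_array_def by auto
  have Fne: "F \<noteq> {}" unfolding F_def by (induction s) (use finG in \<open>auto simp: translate_def\<close>)
  have eq: "fractal G r = (\<lambda>(a,n). a + n * T) ` (F \<times> G)"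
    unfolding r fractal_Suc_image F_def T_def ..
  have inj: "inj_on (\<lambda>(a,n). a + n * T) (F \<times> G)"
    proof (rule inj_onI)
    fix u v assume u: "u \<in> F \<times> G" and v: "v \<in> F \<times> G"
      and e: "(\<lambda>(a,n). a + n * T) u = (\<lambda>(a,n). a + n * T) v"
    obtain a n where un: "u = (a,n)" "a \<in> F" using u by auto
    obtain a' n' where vn: "v = (a',n')" "a' \<in> F" using v by auto
    have "0 \<le> a" "a < T" "0 \<le> a'" "a' < T" using Fb un vn by auto
    then show "u = v" using inj_aux[of a T a' n n'] e un vn by simp
  qed
  have cardF': "card (fractal G r) = card F * card G"
    unfolding eq using card_image[OF inj] card_cartesian_product by metis
  have "essential_set (fractal G r) \<subseteq> (\<lambda>(a,n). a + n * T) ` (F \<times> essential_set G)"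
    unfolding eq by (rule ess_sub[OF Fb])
  moreover have "finite (F \<times> essential_set G)"
    using finF finG unfolding essential_set_def by simp
  ultimately have "card (essential_set (fractal G r)) \<le> card (F \<times> essential_set G)"
    by (meson card_image_le card_mono finite_imageI order_trans)
  hence ce: "card (essential_set (fractal G r)) \<le> card F * card (essential_set G)"
    by (simp add: card_cartesian_product)
  have pF: "card F > 0" using finF Fne by (simp add: card_gt_0_iff)
  have pG: "card G > 0" using finG by (simp add: card_gt_0_iff)
  have "fragility (fractal G r) = real (card (essential_set (fractal G r))) / (real (card F) * real (card G))"
    unfolding fragility_def cardF' by simp
  also have "\<dots> \<le> (real (card F) * real (card (essential_set G))) / (real (card F) * real (card G))"
    using ce pF pG by (intro divide_right_mono) (simp_all add: of_nat_mult[symmetric] del: of_nat_mult)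
  also have "\<dots> = fragility G" unfolding fragility_def using pF by simp
  finally show ?thesis .
qed

end
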